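(* Let $p\ge2$ and $A\in GL_n(\mathbb{C}(z))$ be such that the system $\phi_p(Y)=AY$ is regular singular at $0$, $1$ and $\infty$. Then there exists $R\in GL_n(\mathbb{C}(z))$ such that $B:=\phi_p(R)^{-1}AR$ is regular at $0$, $1$ and $\infty$ (i.e. the system $\phi_p(Y)=BY$ is Fuchsian at $0$, $1$ and $\infty$).
   Context: $\phi_p$ acts entrywise by $f(z)\mapsto f(z^p)$. A matrix is regular at $x\in\mathbb{C}$ if its entries are analytic at $x$ and its value at $x$ is invertible; regular at $\infty$ if $A(1/z)$ is regular at $0$. For $x\in\{0,1,\infty\}$ let $K_x$ be $\mathbb{C}(\{z\})$, $\mathbb{C}(\{z-1\})$, $\mathbb{C}(\{1/z\})$ respectively (fields of convergent Laurent series at $x$). The system $\phi_p(Y)=AY$ is regular singular at $x$ if there is $T\in GL_n(K_x)$ such that $\phi_p(T)^{-1}AT$ is regular at $x$. *)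

theory Defs
  imports "HOL-Complex_Analysis.Complex_Analysis"
    "HOL-Computational_Algebra.Polynomial_Factorial"
    "HOL-Computational_Algebra.Normalized_Fraction"
    "HOL-Computational_Algebra.Field_as_Ring"
begin

type_synonym ratfun = "complex poly fract"

text \<open>Evaluation of a rational function at a point, via its reduced representation
  (at poles the value is the junk value of division by zero; only germs matter below).\<close>
definition rf_eval :: "ratfun \<Rightarrow> complex \<Rightarrow> complex" where
  "rf_eval r z = (case quot_of_fract r of (a, b) \<Rightarrow> poly a z / poly b z)"

definition mat_eval :: "ratfun ^'n ^'n \<Rightarrow> complex \<Rightarrow> complex ^'n ^'n" where
  "mat_eval A z = (\<chi> i j. rf_eval (A $ i $ j) z)"

definition phi_rf :: "nat \<Rightarrow> ratfun \<Rightarrow> ratfun" where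
  "phi_rf p r = (case quot_of_fract r of (a, b) \<Rightarrow>
      Fract (pcompose a (monom 1 p)) (pcompose b (monom 1 p)))"

definition phi_mat :: "nat \<Rightarrow> ratfun ^'n ^'n \<Rightarrow> ratfun ^'n ^'n" where
  "phi_mat p A = (\<chi> i j. phi_rf p (A $ i $ j))"

definition germ_regular_at :: "(complex \<Rightarrow> complex ^'n ^'n) \<Rightarrow> complex \<Rightarrow> bool" where
  "germ_regular_at F x \<longleftrightarrow>
     (\<exists>G. (\<forall>i j. (\<lambda>w. G w $ i $ j) analytic_on {x}) \<and> det (G x) \<noteq> 0 \<and>
          eventually (\<lambda>w. F w = G w) (at x))"

definition regular_at :: "ratfun ^'n ^'n \<Rightarrow> complex \<Rightarrow> bool" where
  "regular_at B x \<longleftrightarrow> germ_regular_at (mat_eval B) x"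

definition regular_at_infinity :: "ratfun ^'n ^'n \<Rightarrow> bool" where
  "regular_at_infinity B \<longleftrightarrow> germ_regular_at (\<lambda>w. mat_eval B (1 / w)) 0"

text \<open>Elements of K_x (convergent Laurent series at x) are
  represented by germs of functions meromorphic at x (library notion
  meromorphic_on, i.e. having a convergent Laurent expansion at x).  A matrix
  T over K_x is in GL_n(K_x) iff its determinant is a nonzero germ.
  The parameter c is the coordinate change: c = id for finite points,
  c w = 1/w with local coordinate w at 0 for the point infinity
  (in the coordinate w = 1/z, phi_p acts again by w to w^p).\<close>
definition reg_sing_chart ::
    "nat \<Rightarrow> ratfun ^'n ^'n \<Rightarrow> (complex \<Rightarrow> complex) \<Rightarrow> complex \<Rightarrow> bool" where
  "reg_sing_chart p A c x \<longleftrightarrow>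
     (\<exists>T :: complex \<Rightarrow> complex ^'n ^'n.
        (\<forall>i j. (\<lambda>w. T w $ i $ j) meromorphic_on {x}) \<and>
        \<not> eventually (\<lambda>w. det (T w) = 0) (at x) \<and>
        germ_regular_at (\<lambda>w. matrix_inv (T (w ^ p)) ** mat_eval A (c w) ** T w) x)"

definition regular_singular_at :: "nat \<Rightarrow> ratfun ^'n ^'n \<Rightarrow> complex \<Rightarrow> bool" where
  "regular_singular_at p A x \<longleftrightarrow> reg_sing_chart p A (\<lambda>w. w) x"

definition regular_singular_at_infinity :: "nat \<Rightarrow> ratfun ^'n ^'n \<Rightarrow> bool" where
  "regular_singular_at_infinity p A \<longleftrightarrow> reg_sing_chart p A (\<lambda>w. 1 / w) 0"

end

theory Submission
  imports Defs
begin

no_notation fps_nth (infixl "$" 75)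


lemma rf_eval_Fract:
  fixes a b :: "complex poly"
  assumes "poly b w \<noteq> 0"
  shows "rf_eval (Fract a b) w = poly a w / poly b w"
proof -
  have b0: "b \<noteq> 0" using assms by auto
  obtain a' b' where q: "quot_of_fract (Fract a b) = (a', b')" by (cases "quot_of_fract (Fract a b)")
  have b'0: "b' \<noteq> 0" using snd_quot_of_fract_nonzero[of "Fract a b"] q by simp
  have "Fract a' b' = Fract a b" using Fract_quot_of_fract[of "Fract a b"] q by simp
  hence eq: "a' * b = a * b'" using b0 b'0 by (simp add: eq_fract)
  have cop: "coprime a' b'" using coprime_quot_of_fract[of "Fract a b"] q by simp
  have pe: "poly a' w * poly b w = poly a w * poly b' w" using arg_cong[OF eq, of "\<lambda>p. poly p w"] by simp
  have nz: "poly b' w \<noteq> 0"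
  proof
    assume z: "poly b' w = 0"
    hence "poly a' w = 0" using pe assms by simp
    hence "[:-w,1:] dvd a'" "[:-w,1:] dvd b'" using z by (simp_all add: poly_eq_0_iff_dvd)
    hence "is_unit [:-w,1:]" using cop coprime_common_divisor by blast
    thus False by (simp add: is_unit_poly_iff)
  qed
  show ?thesis using nz assms pe unfolding rf_eval_def q by (simp add: field_simps)
qed

definition rden :: "ratfun \<Rightarrow> complex poly" where "rden r = snd (quot_of_fract r)"
definition rnum :: "ratfun \<Rightarrow> complex poly" where "rnum r = fst (quot_of_fract r)"

lemma rden_nz [simp]: "rden r \<noteq> 0" by (simp add: rden_def)
lemma r_Fract: "r = Fract (rnum r) (rden r)" by (simp add: rden_def rnum_def)
lemma rf_eval_altdef: "rf_eval r w = poly (rnum r) w / poly (rden r) w"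
  by (simp add: rf_eval_def rden_def rnum_def split: prod.splits)

lemma ev_cofinite_poly: "p \<noteq> 0 \<Longrightarrow> eventually (\<lambda>w. poly p w \<noteq> (0::complex)) cofinite"
  by (simp add: eventually_cofinite poly_roots_finite)

lemma ev_rden: "eventually (\<lambda>w. poly (rden r) w \<noteq> 0) cofinite"
  by (rule ev_cofinite_poly) simp

lemma rf_eval_add: "eventually (\<lambda>w. rf_eval (r + s) w = rf_eval r w + rf_eval s w) cofinite"
proof -
  have "eventually (\<lambda>w. poly (rden r) w \<noteq> 0 \<and> poly (rden s) w \<noteq> 0) cofinite"
    using ev_rden[of r] ev_rden[of s] eventually_conj by blast
  thus ?thesis
  proof (rule eventually_mono)
    fix w assume h: "poly (rden r) w \<noteq> 0 \<and> poly (rden s) w \<noteq> 0"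
    have "r + s = Fract (rnum r * rden s + rnum s * rden r) (rden r * rden s)"
    proof -
      have "r + s = Fract (rnum r) (rden r) + Fract (rnum s) (rden s)" by (simp only: r_Fract[symmetric])
      also have "\<dots> = Fract (rnum r * rden s + rnum s * rden r) (rden r * rden s)" by simp
      finally show ?thesis .
    qed
    hence "rf_eval (r + s) w = poly (rnum r * rden s + rnum s * rden r) w / poly (rden r * rden s) w"
      using h by (simp add: rf_eval_Fract)
    also have "\<dots> = poly (rnum r) w / poly (rden r) w + poly (rnum s) w / poly (rden s) w"
      using h by (simp only: poly_mult poly_add add_frac_eq[of "poly (rden r) w" "poly (rden s) w"] simp_thms)
    finally show "rf_eval (r + s) w = rf_eval r w + rf_eval s w"
      by (simp only: rf_eval_altdef[of r w, symmetric] rf_eval_altdef[of s w, symmetric])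
  qed
qed

lemma rf_eval_mult: "eventually (\<lambda>w. rf_eval (r * s) w = rf_eval r w * rf_eval s w) cofinite"
proof -
  have "eventually (\<lambda>w. poly (rden r) w \<noteq> 0 \<and> poly (rden s) w \<noteq> 0) cofinite"
    using ev_rden[of r] ev_rden[of s] eventually_conj by blast
  thus ?thesis
  proof (rule eventually_mono)
    fix w assume h: "poly (rden r) w \<noteq> 0 \<and> poly (rden s) w \<noteq> 0"
    have "r * s = Fract (rnum r * rnum s) (rden r * rden s)"
    proof -
      have "r * s = Fract (rnum r) (rden r) * Fract (rnum s) (rden s)" by (simp only: r_Fract[symmetric])
      also have "\<dots> = Fract (rnum r * rnum s) (rden r * rden s)" by simp
      finally show ?thesis .
    qed
    hence "rf_eval (r * s) w = poly (rnum r * rnum s) w / poly (rden r * rden s) w"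
      using h by (simp add: rf_eval_Fract)
    also have "\<dots> = poly (rnum r) w / poly (rden r) w * (poly (rnum s) w / poly (rden s) w)"
      by (simp only: poly_mult times_divide_times_eq)
    finally show "rf_eval (r * s) w = rf_eval r w * rf_eval s w"
      by (simp only: rf_eval_altdef[of r w, symmetric] rf_eval_altdef[of s w, symmetric])
  qed
qed

lemma rf_eval_uminus: "rf_eval (- r) w = - rf_eval r w"
  by (simp add: rf_eval_def quot_of_fract_uminus split: prod.splits)

lemma rf_eval_0 [simp]: "rf_eval 0 w = 0" by (simp add: rf_eval_def)
lemma rf_eval_1 [simp]: "rf_eval 1 w = 1" by (simp add: rf_eval_def)

lemma rf_eval_const [simp]: "rf_eval (Fract [:c:] 1) w = c"
  by (subst rf_eval_Fract) auto




lemma matrix_inv_works: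
  fixes A :: "'a::field^'n^'n"
  assumes "invertible A"
  shows "A ** matrix_inv A = mat 1" "matrix_inv A ** A = mat 1"
proof -
  have "\<exists>A'. A ** A' = mat 1 \<and> A' ** A = mat 1" using assms by (simp add: invertible_def)
  hence "A ** matrix_inv A = mat 1 \<and> matrix_inv A ** A = mat 1"
    unfolding matrix_inv_def by (rule someI_ex)
  thus "A ** matrix_inv A = mat 1" "matrix_inv A ** A = mat 1" by auto
qed

lemma matrix_inv_unique:
  fixes A B :: "'a::field^'n^'n"
  assumes "A ** B = mat 1"
  shows "matrix_inv A = B"
proof -
  have BA: "B ** A = mat 1" using assms matrix_left_right_inverse by blast
  hence inv: "invertible A" using assms by (auto simp: invertible_def)
  have "matrix_inv A = matrix_inv A ** (A ** B)" using assms by simp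
  also have "\<dots> = (matrix_inv A ** A) ** B" by (simp add: matrix_mul_assoc)
  also have "\<dots> = B" using matrix_inv_works(2)[OF inv] by simp
  finally show ?thesis .
qed

lemma matrix_inv_mult:
  fixes A B :: "'a::field^'n^'n"
  assumes "invertible A" "invertible B"
  shows "matrix_inv (A ** B) = matrix_inv B ** matrix_inv A"
proof (rule matrix_inv_unique)
  have "A ** B ** (matrix_inv B ** matrix_inv A) = A ** (B ** matrix_inv B) ** matrix_inv A"
    by (simp add: matrix_mul_assoc)
  also have "\<dots> = mat 1" using matrix_inv_works(1)[OF assms(1)] matrix_inv_works(1)[OF assms(2)] by simp
  finally show "A ** B ** (matrix_inv B ** matrix_inv A) = mat 1" .
qed

lemma rf_eval_poly: "rf_eval (Fract q 1) w = poly q w"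
  by (subst rf_eval_Fract) auto

lemma rf_eval_sum:
  assumes "finite S"
  shows "eventually (\<lambda>w. rf_eval (sum f S) w = (\<Sum>i\<in>S. rf_eval (f i) w)) cofinite"
  using assms
proof (induction S rule: finite_induct)
  case empty then show ?case by simp
next
  case (insert x F)
  have "eventually (\<lambda>w. rf_eval (f x + sum f F) w = rf_eval (f x) w + rf_eval (sum f F) w) cofinite"
    by (rule rf_eval_add)
  with insert.IH show ?case
    by eventually_elim (use insert.hyps in simp)
qed

lemma rf_eval_prod:
  assumes "finite S"
  shows "eventually (\<lambda>w. rf_eval (prod f S) w = (\<Prod>i\<in>S. rf_eval (f i) w)) cofinite"
  using assms
proof (induction S rule: finite_induct)
  case empty then show ?case by simp
next
  case (insert x F)
  have "eventually (\<lambda>w. rf_eval (f x * prod f F) w = rf_eval (f x) w * rf_eval (prod f F) w) cofinite"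
    by (rule rf_eval_mult)
  with insert.IH show ?case
    by eventually_elim (use insert.hyps in simp)
qed

lemma ev_all_finite:
  "(\<And>i::'n::finite. eventually (P i) F) \<Longrightarrow> eventually (\<lambda>w. \<forall>i. P i w) F"
  by (simp add: eventually_all_finite)

lemma mat_eval_mult:
  fixes A B :: "ratfun^'n^'n"
  shows "eventually (\<lambda>w. mat_eval (A ** B) w = mat_eval A w ** mat_eval B w) cofinite"
proof -
  have "\<And>i j. eventually (\<lambda>w. rf_eval ((A ** B) $ i $ j) w = (mat_eval A w ** mat_eval B w) $ i $ j) cofinite"
  proof -
    fix i j
    have 1: "eventually (\<lambda>w. rf_eval (\<Sum>k\<in>UNIV. A$i$k * B$k$j) w = (\<Sum>k\<in>UNIV. rf_eval (A$i$k * B$k$j) w)) cofinite"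
      by (rule rf_eval_sum) simp
    have 2: "eventually (\<lambda>w. \<forall>k. rf_eval (A$i$k * B$k$j) w = rf_eval (A$i$k) w * rf_eval (B$k$j) w) cofinite"
      by (rule ev_all_finite, rule rf_eval_mult)
    show "eventually (\<lambda>w. rf_eval ((A ** B) $ i $ j) w = (mat_eval A w ** mat_eval B w) $ i $ j) cofinite"
      using 1 2 by eventually_elim (simp add: matrix_matrix_mult_def mat_eval_def)
  qed
  hence "eventually (\<lambda>w. \<forall>i j. rf_eval ((A ** B) $ i $ j) w = (mat_eval A w ** mat_eval B w) $ i $ j) cofinite"
    by (intro ev_all_finite)
  thus ?thesis by eventually_elim (simp add: vec_eq_iff mat_eval_def)
qed

lemma rf_eval_of_int_sign: "rf_eval (of_int (sign p)) w = of_int (sign p)"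
  by (cases "evenperm p") (auto simp: sign_def rf_eval_uminus)

lemma mat_eval_det:
  fixes A :: "ratfun^'n^'n"
  shows "eventually (\<lambda>w. rf_eval (det A) w = det (mat_eval A w)) cofinite"
proof -
  let ?P = "{p. p permutes (UNIV :: 'n set)}"
  have fin: "finite ?P" by (simp add: finite_permutations)
  have 1: "eventually (\<lambda>w. rf_eval (det A) w = (\<Sum>p\<in>?P. rf_eval (of_int (sign p) * prod (\<lambda>i. A$i$p i) UNIV) w)) cofinite"
    unfolding det_def by (rule rf_eval_sum[OF fin])
  have 2: "\<And>p. eventually (\<lambda>w. rf_eval (of_int (sign p) * prod (\<lambda>i. A$i$p i) UNIV) w
        = of_int (sign p) * prod (\<lambda>i. rf_eval (A$i$p i) w) UNIV) cofinite"
  proof -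
    fix p :: "'n \<Rightarrow> 'n"
    have a: "eventually (\<lambda>w. rf_eval (of_int (sign p) * prod (\<lambda>i. A$i$p i) UNIV) w
        = rf_eval (of_int (sign p)) w * rf_eval (prod (\<lambda>i. A$i$p i) UNIV) w) cofinite" by (rule rf_eval_mult)
    have b: "eventually (\<lambda>w. rf_eval (prod (\<lambda>i. A$i$p i) UNIV) w = prod (\<lambda>i. rf_eval (A$i$p i) w) UNIV) cofinite"
      by (rule rf_eval_prod) simp
    from a b show "?thesis p" by eventually_elim (simp add: rf_eval_of_int_sign)
  qed
  have 3: "eventually (\<lambda>w. \<forall>p\<in>?P. rf_eval (of_int (sign p) * prod (\<lambda>i. A$i$p i) UNIV) w
        = of_int (sign p) * prod (\<lambda>i. rf_eval (A$i$p i) w) UNIV) cofinite"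
    by (rule eventually_ball_finite[OF fin]) (use 2 in auto)
  from 1 3 show ?thesis
    by eventually_elim (simp add: det_def mat_eval_def)
qed

lemma rf_eval_nz:
  assumes "r \<noteq> 0"
  shows "eventually (\<lambda>w. rf_eval r w \<noteq> 0) cofinite"
proof -
  have "rnum r \<noteq> 0" using assms by (simp add: rnum_def)
  from ev_cofinite_poly[OF this] ev_rden[of r]
  show ?thesis by eventually_elim (simp add: rf_eval_altdef)
qed

lemma mat_eval_one: "mat_eval (mat 1) w = mat 1"
  by (simp add: mat_eval_def mat_def vec_eq_iff)

lemma mat_eval_inv:
  fixes R :: "ratfun^'n^'n"
  assumes "invertible R"
  shows "eventually (\<lambda>w. mat_eval (matrix_inv R) w = matrix_inv (mat_eval R w)) cofinite"
proof -
  have "eventually (\<lambda>w. mat_eval (R ** matrix_inv R) w = mat_eval R w ** mat_eval (matrix_inv R) w) cofinite"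
    by (rule mat_eval_mult)
  thus ?thesis
  proof eventually_elim
    case (elim w)
    hence "mat_eval R w ** mat_eval (matrix_inv R) w = mat 1"
      using matrix_inv_works(1)[OF assms] by (simp add: mat_eval_one)
    thus ?case by (simp add: matrix_inv_unique)
  qed
qed

lemma cofinite_vimage_inj:
  assumes "eventually P cofinite" "inj f"
  shows "eventually (\<lambda>w. P (f w)) cofinite"
proof -
  have "{x. \<not> P (f x)} = f -` {x. \<not> P x}" by auto
  thus ?thesis using assms finite_vimageI[of "{x. \<not> P x}" f] by (simp add: eventually_cofinite)
qed

lemma finite_power_preimage:
  assumes "finite S" "(p::nat) \<ge> 1"
  shows "finite {w::complex. w ^ p \<in> S}"
proof -
  have fin1: "finite {w::complex. w ^ p = s}" for s
  proof -
    have ne: "monom (1::complex) p - [:s:] \<noteq> 0"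
    proof
      assume "monom (1::complex) p - [:s:] = 0"
      hence "coeff (monom (1::complex) p - [:s:]) p = 0" by simp
      moreover have "coeff [:s:] p = 0" using assms(2) by (cases p) auto
      ultimately show False by (simp add: coeff_monom)
    qed
    have "{w::complex. w ^ p = s} = {w. poly (monom 1 p - [:s:]) w = 0}" by (auto simp: poly_monom)
    thus ?thesis using poly_roots_finite[OF ne] by simp
  qed
  have "{w::complex. w ^ p \<in> S} = (\<Union>s\<in>S. {w. w ^ p = s})" by auto
  thus ?thesis using assms(1) fin1 by simp
qed

lemma cofinite_vimage_power:
  assumes "eventually P cofinite" "(p::nat) \<ge> 1"
  shows "eventually (\<lambda>w::complex. P (w ^ p)) cofinite"
proof -
  have "{w. \<not> P (w ^ p)} = {w. w ^ p \<in> {x. \<not> P x}}" by auto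
  thus ?thesis using assms finite_power_preimage[of "{x. \<not> P x}" p] by (simp add: eventually_cofinite)
qed

lemma rf_eval_phi:
  assumes "p \<ge> 1"
  shows "eventually (\<lambda>w. rf_eval (phi_rf p r) w = rf_eval r (w ^ p)) cofinite"
proof -
  have d: "degree (monom (1::complex) p) > 0" using assms by (simp add: degree_monom_eq)
  have "pcompose (rden r) (monom 1 p) \<noteq> 0" using pcompose_eq_0[OF _ d, of "rden r"] by auto
  from ev_cofinite_poly[OF this] show ?thesis
  proof eventually_elim
    case (elim w)
    have ph: "phi_rf p r = Fract (pcompose (rnum r) (monom 1 p)) (pcompose (rden r) (monom 1 p))"
      by (simp add: phi_rf_def rnum_def rden_def split: prod.splits)
    have "rf_eval (phi_rf p r) w = poly (pcompose (rnum r) (monom 1 p)) w / poly (pcompose (rden r) (monom 1 p)) w"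
      unfolding ph by (rule rf_eval_Fract[OF elim])
    thus ?case using elim by (simp add: poly_pcompose poly_monom rf_eval_altdef)
  qed
qed

lemma mat_eval_phi:
  assumes "p \<ge> 1"
  shows "eventually (\<lambda>w. mat_eval (phi_mat p R) w = mat_eval R (w ^ p)) cofinite"
proof -
  have "eventually (\<lambda>w. \<forall>i j. rf_eval (phi_rf p (R$i$j)) w = rf_eval (R$i$j) (w ^ p)) cofinite"
    by (intro ev_all_finite rf_eval_phi assms)
  thus ?thesis by eventually_elim (simp add: mat_eval_def phi_mat_def vec_eq_iff)
qed




definition vo :: "(complex \<Rightarrow> complex) \<Rightarrow> complex \<Rightarrow> int \<Rightarrow> bool" where
  "vo f x N \<longleftrightarrow> (\<exists>h. h analytic_on {x} \<and> eventually (\<lambda>w. f w = (w - x) powi N * h w) (at x))"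

lemma analytic_on_poly [analytic_intros]:
  "f analytic_on S \<Longrightarrow> (\<lambda>w. poly q (f w)) analytic_on S"
  by (simp add: poly_altdef) (intro analytic_intros)

lemma vo_cong:
  assumes "vo f x N" "eventually (\<lambda>w. f w = g w) (at x)"
  shows "vo g x N"
proof -
  obtain h where h: "h analytic_on {x}" "eventually (\<lambda>w. f w = (w - x) powi N * h w) (at x)"
    using assms(1) unfolding vo_def by blast
  from h(2) assms(2) have "eventually (\<lambda>w. g w = (w - x) powi N * h w) (at x)"
    by eventually_elim simp
  with h(1) show ?thesis unfolding vo_def by blast
qed

lemma vo_mono:
  assumes "vo f x N" "M \<le> N"
  shows "vo f x M"
proof -
  obtain h where h: "h analytic_on {x}" "eventually (\<lambda>w. f w = (w - x) powi N * h w) (at x)"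
    using assms(1) unfolding vo_def by blast
  define h' where "h' = (\<lambda>w. (w - x) ^ nat (N - M) * h w)"
  have "h' analytic_on {x}" unfolding h'_def by (intro analytic_intros h(1))
  moreover have "eventually (\<lambda>w. f w = (w - x) powi M * h' w) (at x)"
  proof -
    have "eventually (\<lambda>w. w \<noteq> x) (at x)" by (simp add: eventually_at_filter)
    with h(2) show ?thesis
    proof eventually_elim
      case (elim w)
      have "(w - x) powi N = (w - x) powi (M + int (nat (N - M)))" using assms(2) by simp
      also have "\<dots> = (w - x) powi M * (w - x) powi int (nat (N - M))"
        by (rule power_int_add) (use elim in simp)
      also have "\<dots> = (w - x) powi M * (w - x) ^ nat (N - M)"
        by (simp only: power_int_of_nat)
      finally show ?case using elim by (simp add: h'_def mult.assoc)
    qed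
  qed
  ultimately show ?thesis unfolding vo_def by blast
qed

lemma vo_add:
  assumes "vo f x N" "vo g x N"
  shows "vo (\<lambda>w. f w + g w) x N"
proof -
  obtain h where h: "h analytic_on {x}" "eventually (\<lambda>w. f w = (w - x) powi N * h w) (at x)"
    using assms(1) unfolding vo_def by blast
  obtain k where k: "k analytic_on {x}" "eventually (\<lambda>w. g w = (w - x) powi N * k w) (at x)"
    using assms(2) unfolding vo_def by blast
  have "(\<lambda>w. h w + k w) analytic_on {x}" by (intro analytic_intros h(1) k(1))
  moreover from h(2) k(2) have "eventually (\<lambda>w. f w + g w = (w - x) powi N * (h w + k w)) (at x)"
    by eventually_elim (simp add: distrib_left)
  ultimately show ?thesis unfolding vo_def by blast
qed

lemma vo_uminus:
  assumes "vo f x N"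
  shows "vo (\<lambda>w. - f w) x N"
proof -
  obtain h where h: "h analytic_on {x}" "eventually (\<lambda>w. f w = (w - x) powi N * h w) (at x)"
    using assms(1) unfolding vo_def by blast
  have "(\<lambda>w. - h w) analytic_on {x}" by (intro analytic_intros h(1))
  moreover from h(2) have "eventually (\<lambda>w. - f w = (w - x) powi N * (- h w)) (at x)"
    by eventually_elim simp
  ultimately show ?thesis unfolding vo_def by blast
qed

lemma vo_diff:
  assumes "vo f x N" "vo g x N"
  shows "vo (\<lambda>w. f w - g w) x N"
  using vo_add[OF assms(1) vo_uminus[OF assms(2)]] by simp

lemma vo_mult:
  assumes "vo f x N" "vo g x M"
  shows "vo (\<lambda>w. f w * g w) x (N + M)"
proof -
  obtain h where h: "h analytic_on {x}" "eventually (\<lambda>w. f w = (w - x) powi N * h w) (at x)"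
    using assms(1) unfolding vo_def by blast
  obtain k where k: "k analytic_on {x}" "eventually (\<lambda>w. g w = (w - x) powi M * k w) (at x)"
    using assms(2) unfolding vo_def by blast
  have "(\<lambda>w. h w * k w) analytic_on {x}" by (intro analytic_intros h(1) k(1))
  moreover have "eventually (\<lambda>w. w \<noteq> x) (at x)" by (simp add: eventually_at_filter)
  with h(2) k(2) have "eventually (\<lambda>w. f w * g w = (w - x) powi (N + M) * (h w * k w)) (at x)"
    by eventually_elim (simp add: power_int_add)
  ultimately show ?thesis unfolding vo_def by blast
qed

lemma vo_analytic:
  assumes "f analytic_on {x}"
  shows "vo f x 0"
  unfolding vo_def using assms by (intro exI[of _ f]) auto

lemma vo_sum:
  assumes "finite S" "\<And>i. i \<in> S \<Longrightarrow> vo (f i) x N"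
  shows "vo (\<lambda>w. \<Sum>i\<in>S. f i w) x N"
  using assms
proof (induction S rule: finite_induct)
  case empty
  have "vo (\<lambda>w. 0) x N" unfolding vo_def by (intro exI[of _ "\<lambda>_. 0"]) auto
  thus ?case by simp
next
  case (insert a F)
  have "vo (f a) x N" using insert.prems by simp
  moreover have "vo (\<lambda>w. \<Sum>i\<in>F. f i w) x N" using insert.IH insert.prems by simp
  ultimately have "vo (\<lambda>w. f a w + (\<Sum>i\<in>F. f i w)) x N" by (rule vo_add)
  thus ?case using insert.hyps by simp
qed

lemma vo_zero: "vo (\<lambda>w. 0) x N"
  unfolding vo_def by (intro exI[of _ "\<lambda>_. 0"]) auto

lemma vo_powi: "vo (\<lambda>w. (w - x) powi N) x N"
  unfolding vo_def by (intro exI[of _ "\<lambda>_. 1"]) auto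

lemma vo_eventually_zero:
  assumes "eventually (\<lambda>w. f w = 0) (at x)"
  shows "vo f x N"
proof -
  from assms have "eventually (\<lambda>w. 0 = f w) (at x)" by eventually_elim simp
  from vo_cong[OF vo_zero this] show ?thesis .
qed

lemma vo_exists:
  assumes "f meromorphic_on {x}"
  shows "\<exists>N. vo f x N"
proof (cases "eventually (\<lambda>w. f w = 0) (at x)")
  case True
  thus ?thesis using vo_eventually_zero by blast
next
  case False
  hence fr: "\<exists>\<^sub>F w in at x. f w \<noteq> 0" by (simp add: not_eventually)
  have iso: "isolated_singularity_at f x" and ne: "not_essential f x"
    using assms by (auto simp: meromorphic_at_iff)
  from zorder_exist[OF iso ne fr] obtain r where r: "r > 0" "zor_poly f x holomorphic_on cball x r"
    "\<forall>w\<in>cball x r - {x}. f w = zor_poly f x w * (w - x) powi (zorder f x)"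
    by blast
  have "zor_poly f x holomorphic_on ball x r" using r(2) by (rule holomorphic_on_subset) auto
  hence an: "zor_poly f x analytic_on {x}" using r(1) analytic_on_open[of "ball x r"]
    by (meson analytic_on_subset centre_in_ball empty_subsetI insert_subset open_ball)
  have "eventually (\<lambda>w. w \<in> ball x r) (at x)"
    using r(1) by (intro eventually_at_in_open') auto
  moreover have "eventually (\<lambda>w. w \<noteq> x) (at x)" by (simp add: eventually_at_filter)
  ultimately have "eventually (\<lambda>w. f w = (w - x) powi (zorder f x) * zor_poly f x w) (at x)"
    by eventually_elim (use r(3) in \<open>auto simp: mult.commute\<close>)
  with an show ?thesis unfolding vo_def by blast
qed

lemma eventually_nonzero_mero:
  assumes "f meromorphic_on {x}" "\<not> eventually (\<lambda>w. f w = 0) (at x)"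
  shows "eventually (\<lambda>w. f w \<noteq> 0) (at x)"
proof -
  have fr: "\<exists>\<^sub>F w in at x. f w \<noteq> 0" using assms(2) by (simp add: not_eventually)
  have iso: "isolated_singularity_at f x" and ne: "not_essential f x"
    using assms by (auto simp: meromorphic_at_iff)
  from zorder_exist[OF iso ne fr] obtain r where r: "r > 0"
    "\<forall>w\<in>cball x r - {x}. f w = zor_poly f x w * (w - x) powi (zorder f x) \<and> zor_poly f x w \<noteq> 0"
    by blast
  have "eventually (\<lambda>w. w \<in> ball x r) (at x)"
    using r(1) by (intro eventually_at_in_open') auto
  moreover have "eventually (\<lambda>w. w \<noteq> x) (at x)" by (simp add: eventually_at_filter)
  ultimately show ?thesis
    by eventually_elim (use r(2) in auto)
qed

lemma analytic_divide_linear: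
  assumes "k analytic_on {x}"
  shows "\<exists>k1. k1 analytic_on {x} \<and> (\<forall>w. k w = k x + (w - x) * k1 w)"
proof -
  obtain e where e: "e > 0" "k holomorphic_on ball x e"
    using assms unfolding analytic_on_def by blast
  define k1 where "k1 = (\<lambda>w. if w = x then deriv k x else (k w - k x) / (w - x))"
  have "k1 holomorphic_on ball x e"
    unfolding k1_def by (rule pole_lemma_open[OF e(2)]) simp
  hence "k1 analytic_on ball x e" by (simp add: analytic_on_open)
  hence "k1 analytic_on {x}" by (rule analytic_on_subset) (use e in auto)
  moreover have "\<forall>w. k w = k x + (w - x) * k1 w" by (auto simp: k1_def)
  ultimately show ?thesis by blast
qed

lemma taylor_vo:
  assumes "h analytic_on {x}"
  shows "\<exists>q. vo (\<lambda>w. h w - poly q (w - x)) x (int N)"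
proof (induction N)
  case 0
  have "vo (\<lambda>w. h w - poly 0 (w - x)) x 0" using vo_analytic[OF assms] by simp
  thus ?case by (intro exI[of _ 0]) simp
next
  case (Suc N)
  then obtain q where "vo (\<lambda>w. h w - poly q (w - x)) x (int N)" by blast
  then obtain k where k: "k analytic_on {x}"
    "eventually (\<lambda>w. h w - poly q (w - x) = (w - x) powi (int N) * k w) (at x)"
    unfolding vo_def by blast
  obtain k1 where k1: "k1 analytic_on {x}" "\<forall>w. k w = k x + (w - x) * k1 w"
    using analytic_divide_linear[OF k(1)] by blast
  have "eventually (\<lambda>w. h w - poly (q + monom (k x) N) (w - x) = (w - x) powi (int (Suc N)) * k1 w) (at x)"
    using k(2)
  proof eventually_elim
    case (elim w)
    have "h w - poly (q + monom (k x) N) (w - x) = (w - x) ^ N * k w - k x * (w - x) ^ N"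
      using elim by (simp add: poly_monom algebra_simps)
    also have "\<dots> = (w - x) ^ Suc N * k1 w"
      by (subst k1(2)) (simp add: algebra_simps)
    finally show ?case by (simp only: power_int_of_nat)
  qed
  with k1(1) show ?case unfolding vo_def by blast
qed

lemma mero_taylor_vo:
  assumes "f meromorphic_on {x}"
  shows "\<exists>k q. vo (\<lambda>w. f w - poly q (w - x) / (w - x) ^ k) x (int N)"
proof -
  obtain M where "vo f x M" using vo_exists[OF assms] by blast
  then obtain h where h: "h analytic_on {x}" "eventually (\<lambda>w. f w = (w - x) powi M * h w) (at x)"
    unfolding vo_def by blast
  define k where "k = nat (- M)"
  define h' where "h' = (\<lambda>w. (w - x) ^ nat M * h w)"
  have an: "h' analytic_on {x}" unfolding h'_def by (intro analytic_intros h(1))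
  obtain q where q: "vo (\<lambda>w. h' w - poly q (w - x)) x (int (N + k))"
    using taylor_vo[OF an] by blast
  have "vo (\<lambda>w. (h' w - poly q (w - x)) * (w - x) powi (- int k)) x (int (N + k) + - int k)"
    by (rule vo_mult[OF q vo_powi])
  hence v: "vo (\<lambda>w. (h' w - poly q (w - x)) * (w - x) powi (- int k)) x (int N)" by simp
  have "eventually (\<lambda>w. w \<noteq> x) (at x)" by (simp add: eventually_at_filter)
  with h(2) have "eventually (\<lambda>w. (h' w - poly q (w - x)) * (w - x) powi (- int k) = f w - poly q (w - x) / (w - x) ^ k) (at x)"
  proof eventually_elim
    case (elim w)
    have "(w - x) powi M = (w - x) powi (int (nat M) + - int k)" unfolding k_def by simp
    also have "\<dots> = (w - x) powi int (nat M) * (w - x) powi (- int k)"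
      by (rule power_int_add) (use elim in simp)
    also have "\<dots> = (w - x) ^ nat M * inverse ((w - x) ^ k)"
      by (simp only: power_int_of_nat power_int_minus)
    finally have fw: "f w = (w - x) ^ nat M * h w * inverse ((w - x) ^ k)"
      using elim by (simp add: algebra_simps)
    have "(h' w - poly q (w - x)) * (w - x) powi (- int k) = (h' w - poly q (w - x)) * inverse ((w - x) ^ k)"
      by (simp only: power_int_of_nat power_int_minus)
    also have "\<dots> = f w - poly q (w - x) / (w - x) ^ k"
      unfolding fw h'_def by (simp add: algebra_simps divide_inverse)
    finally show ?case .
  qed
  from vo_cong[OF v this] show ?thesis by blast
qed



definition cinv :: "complex^'n^'n \<Rightarrow> complex^'n^'n" where
  "cinv A = (\<chi> k j. det (\<chi> i l. if l = k then (if i = j then 1 else 0) else A$i$l) / det A)"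

lemma cinv_eq:
  fixes A :: "complex^'n^'n"
  assumes "det A \<noteq> 0"
  shows "matrix_inv A = cinv A"
proof -
  have inv: "invertible A" using assms by (simp add: invertible_det_nz)
  have "matrix_inv A $ k $ j = cinv A $ k $ j" for k j
  proof -
    define b :: "complex^'n" where "b = (\<chi> i. if i = j then 1 else 0)"
    have "A *v (matrix_inv A *v b) = b"
      by (simp add: matrix_vector_mul_assoc matrix_inv_works(1)[OF inv])
    hence "matrix_inv A *v b = (\<chi> k. det(\<chi> i l. if l = k then b$i else A$i$l) / det A)"
      using cramer[OF assms] by blast
    hence "(matrix_inv A *v b) $ k = det(\<chi> i l. if l = k then b$i else A$i$l) / det A" by simp
    moreover have "(matrix_inv A *v b) $ k = matrix_inv A $ k $ j"
      by (simp add: matrix_vector_mult_def b_def if_distrib cong: if_cong)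
    moreover have "(\<chi> i l. if l = k then b$i else A$i$l) = (\<chi> i l. if l = k then (if i = j then 1 else 0) else A$i$l)"
      unfolding b_def by (simp cong: if_cong)
    ultimately show ?thesis by (simp add: cinv_def)
  qed
  thus ?thesis by (simp add: vec_eq_iff)
qed

lemma analytic_det:
  fixes F :: "complex \<Rightarrow> complex^'n^'n"
  assumes "\<And>i j. (\<lambda>w. F w $ i $ j) analytic_on S"
  shows "(\<lambda>w. det (F w)) analytic_on S"
  unfolding det_def by (intro analytic_intros assms)

lemma mero_det:
  fixes F :: "complex \<Rightarrow> complex^'n^'n"
  assumes "\<And>i j. (\<lambda>w. F w $ i $ j) meromorphic_on S"
  shows "(\<lambda>w. det (F w)) meromorphic_on S"
  unfolding det_def by (intro meromorphic_intros assms)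

lemma analytic_matmul:
  fixes F G :: "complex \<Rightarrow> complex^'n^'n"
  assumes "\<And>i j. (\<lambda>w. F w $ i $ j) analytic_on S" "\<And>i j. (\<lambda>w. G w $ i $ j) analytic_on S"
  shows "(\<lambda>w. (F w ** G w) $ i $ j) analytic_on S"
  unfolding matrix_matrix_mult_def by (simp, intro analytic_intros assms)

lemma modmat_entry_analytic:
  fixes F :: "complex \<Rightarrow> complex^'n^'n"
  assumes "\<And>i j. (\<lambda>w. F w $ i $ j) analytic_on S"
  shows "(\<lambda>w. (\<chi> i l. if l = k then (if i = j then 1 else 0) else F w $ i $ l) $ a $ b) analytic_on S"
  by (cases "b = k") (simp_all add: assms)

lemma modmat_entry_mero:
  fixes F :: "complex \<Rightarrow> complex^'n^'n"
  assumes "\<And>i j. (\<lambda>w. F w $ i $ j) meromorphic_on S"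
  shows "(\<lambda>w. (\<chi> i l. if l = k then (if i = j then 1 else 0) else F w $ i $ l) $ a $ b) meromorphic_on S"
  by (cases "b = k") (auto simp: assms)

lemma analytic_cinv:
  fixes F :: "complex \<Rightarrow> complex^'n^'n"
  assumes "\<And>i j. (\<lambda>w. F w $ i $ j) analytic_on {x}" "det (F x) \<noteq> 0"
  shows "(\<lambda>w. cinv (F w) $ k $ j) analytic_on {x}"
proof -
  have "(\<lambda>w. det (\<chi> i l. if l = k then (if i = j then 1 else 0) else F w $ i $ l) / det (F w)) analytic_on {x}"
    by (intro analytic_on_divide analytic_det modmat_entry_analytic assms) (use assms(2) in auto)
  thus ?thesis by (simp add: cinv_def)
qed

lemma mero_cinv:
  fixes F :: "complex \<Rightarrow> complex^'n^'n"
  assumes "\<And>i j. (\<lambda>w. F w $ i $ j) meromorphic_on {x}"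
  shows "(\<lambda>w. cinv (F w) $ k $ j) meromorphic_on {x}"
proof -
  have "(\<lambda>w. det (\<chi> i l. if l = k then (if i = j then 1 else 0) else F w $ i $ l) / det (F w)) meromorphic_on {x}"
    by (intro meromorphic_intros mero_det modmat_entry_mero assms)
  thus ?thesis by (simp add: cinv_def)
qed

lemma inv_bound:
  fixes T :: "complex \<Rightarrow> complex^'n^'n"
  assumes Tm: "\<And>i j. (\<lambda>w. T w $ i $ j) meromorphic_on {x}"
    and Td: "\<not> eventually (\<lambda>w. det (T w) = 0) (at x)"
  shows "\<exists>K. \<forall>i j. vo (\<lambda>w. matrix_inv (T w) $ i $ j) x K"
proof -
  have dT: "eventually (\<lambda>w. det (T w) \<noteq> 0) (at x)"
    by (rule eventually_nonzero_mero[OF mero_det[OF Tm] Td])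
  have "\<forall>i j. \<exists>N. vo (\<lambda>w. matrix_inv (T w) $ i $ j) x N"
  proof (intro allI)
    fix i j
    obtain N where N: "vo (\<lambda>w. cinv (T w) $ i $ j) x N" using vo_exists[OF mero_cinv[OF Tm]] by blast
    have "eventually (\<lambda>w. cinv (T w) $ i $ j = matrix_inv (T w) $ i $ j) (at x)"
      using dT by eventually_elim (simp add: cinv_eq)
    from vo_cong[OF N this] show "\<exists>N. vo (\<lambda>w. matrix_inv (T w) $ i $ j) x N" by blast
  qed
  then obtain NN where NN: "\<forall>i j. vo (\<lambda>w. matrix_inv (T w) $ i $ j) x (NN i j)" by metis
  define K where "K = Min (range (\<lambda>(i,j). NN i j))"
  have "K \<le> NN i j" for i j unfolding K_def by (rule Min_le) auto
  hence "\<forall>i j. vo (\<lambda>w. matrix_inv (T w) $ i $ j) x K" using NN vo_mono by blast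
  thus ?thesis by blast
qed

lemma filterlim_compose_ev:
  assumes "filterlim g (at x) (at x)" "eventually P (at x)"
  shows "eventually (\<lambda>w. P (g w)) (at x)"
  using assms by (simp add: filterlim_iff)

lemma local_regular:
  fixes T Rc Ac Bc :: "complex \<Rightarrow> complex^'n^'n"
  assumes Tm: "\<And>i j. (\<lambda>w. T w $ i $ j) meromorphic_on {x}"
    and Td: "\<not> eventually (\<lambda>w. det (T w) = 0) (at x)"
    and reg: "germ_regular_at (\<lambda>w. matrix_inv (T (w ^ p)) ** Ac w ** T w) x"
    and Kinv: "\<forall>i j. vo (\<lambda>w. matrix_inv (T w) $ i $ j) x K"
    and Rapp: "\<forall>i j. vo (\<lambda>w. Rc w $ i $ j - T w $ i $ j) x (1 - K)"
    and lim: "filterlim (\<lambda>w. w ^ p) (at x) (at x)"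
    and xp: "x ^ p = x"
    and Bev: "eventually (\<lambda>w. Bc w = matrix_inv (Rc (w ^ p)) ** Ac w ** Rc w) (at x)"
  shows "germ_regular_at Bc x \<and> eventually (\<lambda>w. det (Rc w) \<noteq> 0) (at x)"
proof -
  have dT: "eventually (\<lambda>w. det (T w) \<noteq> 0) (at x)"
    by (rule eventually_nonzero_mero[OF mero_det[OF Tm] Td])
  have "\<forall>i j. \<exists>h. h analytic_on {x} \<and> eventually (\<lambda>w. (\<Sum>k\<in>UNIV. matrix_inv (T w) $ i $ k * (Rc w $ k $ j - T w $ k $ j))
            = (w - x) powi 1 * h w) (at x)"
  proof (intro allI)
    fix i j
    have "vo (\<lambda>w. \<Sum>k\<in>UNIV. matrix_inv (T w) $ i $ k * (Rc w $ k $ j - T w $ k $ j)) x (K + (1 - K))"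
      by (intro vo_sum vo_mult Kinv[rule_format] Rapp[rule_format]) auto
    thus "\<exists>h. h analytic_on {x} \<and> eventually (\<lambda>w. (\<Sum>k\<in>UNIV. matrix_inv (T w) $ i $ k * (Rc w $ k $ j - T w $ k $ j))
            = (w - x) powi 1 * h w) (at x)" unfolding vo_def by simp
  qed
  then obtain hh where hh: "\<And>i j. hh i j analytic_on {x}"
    "\<And>i j. eventually (\<lambda>w. (\<Sum>k\<in>UNIV. matrix_inv (T w) $ i $ k * (Rc w $ k $ j - T w $ k $ j))
            = (w - x) powi 1 * hh i j w) (at x)"
  proof -
    let ?P = "\<lambda>i j h. h analytic_on {x} \<and> eventually (\<lambda>w. (\<Sum>k\<in>UNIV. matrix_inv (T w) $ i $ k * (Rc w $ k $ j - T w $ k $ j))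
            = (w - x) powi 1 * h w) (at x)"
    assume that: "\<And>hh. (\<And>i j. hh i j analytic_on {x}) \<Longrightarrow> (\<And>i j. eventually (\<lambda>w. (\<Sum>k\<in>UNIV. matrix_inv (T w) $ i $ k * (Rc w $ k $ j - T w $ k $ j))
            = (w - x) powi 1 * hh i j w) (at x)) \<Longrightarrow> thesis"
    have ex: "\<forall>i j. \<exists>h. ?P i j h" by fact
    have "\<forall>i. \<exists>f. \<forall>j. ?P i j (f j)"
    proof
      fix i show "\<exists>f. \<forall>j. ?P i j (f j)" using ex by (intro choice) blast
    qed
    from choice[OF this] obtain hh where "\<forall>i. \<forall>j. ?P i j (hh i j)" by blast
    thus thesis using that by blast
  qed
  define H where "H = (\<lambda>w. (\<chi> i j. (if i = j then 1 else 0) + (w - x) * hh i j w) :: complex^'n^'n)"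
  have Han: "\<And>i j. (\<lambda>w. H w $ i $ j) analytic_on {x}"
  proof -
    fix i j
    have e: "(\<lambda>w. H w $ i $ j) = (\<lambda>w. (if i = j then 1 else 0) + (w - x) * hh i j w)" by (simp add: H_def)
    show "(\<lambda>w. H w $ i $ j) analytic_on {x}" unfolding e by (intro analytic_intros hh(1))
  qed
  have Hx: "H x = mat 1" by (simp add: H_def vec_eq_iff mat_def)
  have ev_hh: "eventually (\<lambda>w. \<forall>i j. (\<Sum>k\<in>UNIV. matrix_inv (T w) $ i $ k * (Rc w $ k $ j - T w $ k $ j))
            = (w - x) powi 1 * hh i j w) (at x)"
    by (intro ev_all_finite hh(2))
  have RTH: "eventually (\<lambda>w. Rc w = T w ** H w \<and> det (T w) \<noteq> 0) (at x)"
    using ev_hh dT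
  proof eventually_elim
    case (elim w)
    have invT: "invertible (T w)" using elim(2) by (simp add: invertible_det_nz)
    define D where "D = Rc w - T w"
    have "matrix_inv (T w) ** D = H w - mat 1"
      using elim(1) by (simp add: vec_eq_iff matrix_matrix_mult_def D_def H_def mat_def)
    hence "T w ** (H w - mat 1) = T w ** (matrix_inv (T w) ** D)" by simp
    also have "\<dots> = (T w ** matrix_inv (T w)) ** D" by (simp add: matrix_mul_assoc)
    also have "\<dots> = D" by (simp add: matrix_inv_works(1)[OF invT])
    finally have TD: "T w ** (H w - mat 1) = D" .
    have "T w ** H w = T w ** ((H w - mat 1) + mat 1)" by simp
    also have "\<dots> = T w ** (H w - mat 1) + T w ** mat 1" by (rule matrix_add_ldistrib)
    also have "\<dots> = Rc w" by (simp add: TD D_def)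
    finally show ?case using elim(2) by simp
  qed
  have RTHp: "eventually (\<lambda>w. Rc (w ^ p) = T (w ^ p) ** H (w ^ p) \<and> det (T (w ^ p)) \<noteq> 0) (at x)"
    by (rule filterlim_compose_ev[OF lim RTH])
  have detHan: "(\<lambda>w. det (H w)) analytic_on {x}" by (rule analytic_det[OF Han])
  have Hpan: "\<And>i j. (\<lambda>w. H (w ^ p) $ i $ j) analytic_on {x}"
  proof -
    fix i j
    have "((\<lambda>w. H w $ i $ j) \<circ> (\<lambda>w. w ^ p)) analytic_on {x}"
    proof (rule analytic_on_compose)
      show "(\<lambda>w. w ^ p) analytic_on {x}" by (intro analytic_intros)
      show "(\<lambda>w. H w $ i $ j) analytic_on (\<lambda>w. w ^ p) ` {x}" using Han[of i j] xp by simp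
    qed
    thus "(\<lambda>w. H (w ^ p) $ i $ j) analytic_on {x}" by (simp add: o_def)
  qed
  have detHpan: "(\<lambda>w. det (H (w ^ p))) analytic_on {x}" by (rule analytic_det[OF Hpan])
  have evH: "eventually (\<lambda>w. det (H w) \<noteq> 0) (at x)"
  proof -
    have "((\<lambda>w. det (H w)) \<longlongrightarrow> det (H x)) (at x)"
      using analytic_at_imp_isCont[OF detHan] by (simp add: isCont_def)
    thus ?thesis by (rule tendsto_imp_eventually_ne) (simp add: Hx)
  qed
  have evHp: "eventually (\<lambda>w. det (H (w ^ p)) \<noteq> 0) (at x)"
  proof -
    have "((\<lambda>w. det (H (w ^ p))) \<longlongrightarrow> det (H (x ^ p))) (at x)"
      using analytic_at_imp_isCont[OF detHpan] by (simp add: isCont_def)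
    thus ?thesis by (rule tendsto_imp_eventually_ne) (simp add: Hx xp)
  qed
  obtain G where G: "\<And>i j. (\<lambda>w. G w $ i $ j) analytic_on {x}" "det (G x) \<noteq> 0"
    "eventually (\<lambda>w. matrix_inv (T (w ^ p)) ** Ac w ** T w = G w) (at x)"
    using reg unfolding germ_regular_at_def by blast
  define G' where "G' = (\<lambda>w. cinv (H (w ^ p)) ** G w ** H w)"
  have c: "\<And>i j. (\<lambda>w. cinv (H (w ^ p)) $ i $ j) analytic_on {x}"
    by (rule analytic_cinv[OF Hpan]) (simp add: Hx xp)
  have m1: "\<And>i j. (\<lambda>w. (cinv (H (w ^ p)) ** G w) $ i $ j) analytic_on {x}"
    by (rule analytic_matmul[OF c G(1)])
  have G'an: "\<And>i j. (\<lambda>w. G' w $ i $ j) analytic_on {x}"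
    unfolding G'_def by (rule analytic_matmul[OF m1 Han])
  have "cinv (mat 1 :: complex^'n^'n) = matrix_inv (mat 1)" by (rule cinv_eq[symmetric]) simp
  also have "\<dots> = mat 1" by (rule matrix_inv_unique) simp
  finally have "cinv (H (x ^ p)) = mat 1" by (simp add: Hx xp)
  hence G'x: "det (G' x) \<noteq> 0" using G(2) by (simp add: G'_def det_mul Hx)
  have "eventually (\<lambda>w. Bc w = G' w) (at x)"
    using Bev RTH RTHp evH evHp G(3)
  proof eventually_elim
    case (elim w)
    have i1: "invertible (T (w ^ p))" using elim(3) by (simp add: invertible_det_nz)
    have i2: "invertible (H (w ^ p))" using elim(5) by (simp add: invertible_det_nz)
    have "Bc w = matrix_inv (T (w ^ p) ** H (w ^ p)) ** Ac w ** (T w ** H w)"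
      using elim(1-3) by simp
    also have "\<dots> = matrix_inv (H (w ^ p)) ** (matrix_inv (T (w ^ p)) ** Ac w ** T w) ** H w"
      by (simp add: matrix_inv_mult[OF i1 i2] matrix_mul_assoc)
    also have "\<dots> = G' w" using elim(5,6) by (simp add: G'_def cinv_eq)
    finally show ?case .
  qed
  hence "germ_regular_at Bc x" unfolding germ_regular_at_def using G'an G'x by blast
  moreover have "eventually (\<lambda>w. det (Rc w) \<noteq> 0) (at x)"
    using RTH evH by eventually_elim (simp add: det_mul)
  ultimately show ?thesis by blast
qed



lemma cofinite_at:
  assumes "eventually P cofinite"
  shows "eventually P (at (x::complex))"
proof -
  have fin: "finite {y. \<not> P y}" using assms by (simp add: eventually_cofinite)
  have "\<not> x islimpt {y. \<not> P y}" using islimpt_finite[OF fin] by blast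
  hence "eventually (\<lambda>y. y \<notin> {y. \<not> P y}) (at x)" by (simp add: islimpt_iff_eventually)
  thus ?thesis by simp
qed

lemma inj_inverse_complex: "inj (\<lambda>w::complex. 1 / w)"
  by (rule injI) (metis inverse_eq_divide inverse_inverse_eq)

lemma cofinite_inv:
  assumes "eventually P cofinite"
  shows "eventually (\<lambda>w::complex. P (1 / w)) cofinite"
  by (rule cofinite_vimage_inj[OF assms inj_inverse_complex])

lemma rf_eval_diff: "eventually (\<lambda>w. rf_eval (r - s) w = rf_eval r w - rf_eval s w) cofinite"
proof -
  have "eventually (\<lambda>w. rf_eval (r + - s) w = rf_eval r w + rf_eval (- s) w) cofinite" by (rule rf_eval_add)
  thus ?thesis by eventually_elim (simp add: rf_eval_uminus)
qed

lemma rf_eval_comb: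
  "eventually (\<lambda>w. rf_eval (a * x + (1 - a - c) * y + c * z) w =
     rf_eval a w * rf_eval x w + (1 - rf_eval a w - rf_eval c w) * rf_eval y w + rf_eval c w * rf_eval z w) cofinite"
proof -
  have 1: "eventually (\<lambda>w. rf_eval (a * x + (1 - a - c) * y + c * z) w = rf_eval (a * x + (1 - a - c) * y) w + rf_eval (c * z) w) cofinite"
    by (rule rf_eval_add)
  have 2: "eventually (\<lambda>w. rf_eval (a * x + (1 - a - c) * y) w = rf_eval (a * x) w + rf_eval ((1 - a - c) * y) w) cofinite"
    by (rule rf_eval_add)
  have 3: "eventually (\<lambda>w. rf_eval (a * x) w = rf_eval a w * rf_eval x w) cofinite" by (rule rf_eval_mult)
  have 4: "eventually (\<lambda>w. rf_eval ((1 - a - c) * y) w = rf_eval (1 - a - c) w * rf_eval y w) cofinite" by (rule rf_eval_mult)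
  have 5: "eventually (\<lambda>w. rf_eval (c * z) w = rf_eval c w * rf_eval z w) cofinite" by (rule rf_eval_mult)
  have 6: "eventually (\<lambda>w. rf_eval (1 - a - c) w = rf_eval (1 - a) w - rf_eval c w) cofinite" by (rule rf_eval_diff)
  have 7: "eventually (\<lambda>w. rf_eval (1 - a) w = rf_eval 1 w - rf_eval a w) cofinite" by (rule rf_eval_diff)
  from 1 2 3 4 5 6 7 show ?thesis by eventually_elim simp
qed

lemma analytic_imp_mero_at: "f analytic_on {x} \<Longrightarrow> f meromorphic_on {x}"
  by (rule analytic_on_imp_meromorphic_on)

lemma vo_nat_bound:
  assumes "vo f x N"
  shows "\<exists>K::nat. vo f x (- int K)"
  by (rule exI[of _ "nat (- N)"], rule vo_mono[OF assms]) simp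

lemma rf_vo_bound: "\<exists>K::nat. vo (rf_eval l) x (- int K)"
proof -
  have "rf_eval l = (\<lambda>w. poly (rnum l) w / poly (rden l) w)" by (simp add: rf_eval_altdef fun_eq_iff)
  moreover have "(\<lambda>w. poly (rnum l) w / poly (rden l) w) meromorphic_on {x}"
    by (intro meromorphic_intros analytic_imp_mero_at analytic_intros)
  ultimately obtain N where "vo (rf_eval l) x N" using vo_exists by metis
  thus ?thesis by (rule vo_nat_bound)
qed

lemma rf_vo_bound_inf: "\<exists>K::nat. vo (\<lambda>w. rf_eval l (1 / w)) 0 (- int K)"
proof -
  have "(\<lambda>w. rf_eval l (1 / w)) = (\<lambda>w. poly (rnum l) (1 / w) / poly (rden l) (1 / w))"
    by (simp add: rf_eval_altdef fun_eq_iff)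
  moreover have "(\<lambda>w::complex. poly (rnum l) (1 / w) / poly (rden l) (1 / w)) meromorphic_on {0}"
    by (simp only: poly_altdef) (intro meromorphic_intros)
  ultimately obtain N where "vo (\<lambda>w. rf_eval l (1 / w)) 0 N" using vo_exists by metis
  thus ?thesis by (rule vo_nat_bound)
qed

lemma vo_comb:
  assumes "vo u x A" "vo c x C" "N \<le> A + C"
  shows "vo (\<lambda>w. u w * c w) x N"
  using vo_mono[OF vo_mult[OF assms(1,2)] assms(3)] .

lemma ev_ne_at: "eventually (\<lambda>w. w \<noteq> x) (at x)"
  by (simp add: eventually_at_filter)

lemma ev_nonzero_cont:
  assumes "isCont f x" "f x \<noteq> (0::complex)"
  shows "eventually (\<lambda>w. f w \<noteq> 0) (at x)"
  using assms by (intro tendsto_imp_eventually_ne) (auto simp: isCont_def)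

definition E0 :: "nat \<Rightarrow> complex \<Rightarrow> complex" where
  "E0 M w = (1 - w) ^ M / ((1 - w) ^ M + w ^ (2 * M))"
definition Ei :: "nat \<Rightarrow> complex \<Rightarrow> complex" where
  "Ei M w = w ^ M * (w - 1) ^ M / (w ^ M * (w - 1) ^ M + 1)"

lemma F1: "vo (\<lambda>w. E0 M w - 1) 0 (int (2 * M))"
proof -
  define D where "D = (\<lambda>w::complex. (1 - w) ^ M + w ^ (2 * M))"
  have "isCont D 0" unfolding D_def by (intro continuous_intros)
  moreover have "D 0 \<noteq> 0" by (cases M) (auto simp: D_def)
  ultimately have evD: "eventually (\<lambda>w. D w \<noteq> 0) (at 0)" by (rule ev_nonzero_cont)
  have an: "(\<lambda>w. - 1 / D w) analytic_on {0}"
    unfolding D_def by (intro analytic_intros) (cases M, auto)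
  have "eventually (\<lambda>w. E0 M w - 1 = (w - 0) powi int (2 * M) * (- 1 / D w)) (at 0)"
    using evD
  proof eventually_elim
    case (elim w)
    have "E0 M w - 1 = ((1 - w) ^ M - D w) / D w" using elim by (simp add: E0_def D_def field_simps)
    also have "\<dots> = w ^ (2 * M) * (- 1 / D w)" by (simp add: D_def)
    finally show ?case by (simp only: power_int_of_nat diff_0_right)
  qed
  with an show ?thesis unfolding vo_def by blast
qed

lemma F2:
  shows "vo (Ei M) 0 (int M)"
proof -
  define D where "D = (\<lambda>w::complex. w ^ M * (w - 1) ^ M + 1)"
  have an: "(\<lambda>w. (w - 1) ^ M / D w) analytic_on {0}"
    unfolding D_def by (intro analytic_intros) (cases M, auto)
  have "eventually (\<lambda>w. Ei M w = (w - 0) powi int M * ((w - 1) ^ M / D w)) (at 0)"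
    by (intro always_eventually allI) (simp add: Ei_def D_def power_int_of_nat)
  with an show ?thesis unfolding vo_def by blast
qed

lemma F3:
  assumes "M \<ge> 1"
  shows "vo (E0 M) 1 (int M)"
proof -
  define D where "D = (\<lambda>w::complex. (1 - w) ^ M + w ^ (2 * M))"
  have an: "(\<lambda>w. (- 1) ^ M / D w) analytic_on {1}"
    unfolding D_def by (intro analytic_intros) (use assms in \<open>auto simp: power_0_left\<close>)
  have "eventually (\<lambda>w. E0 M w = (w - 1) powi int M * ((- 1) ^ M / D w)) (at 1)"
  proof (intro always_eventually allI)
    fix w :: complex
    have "(1 - w) ^ M = (w - 1) ^ M * (- 1) ^ M"
      by (metis minus_diff_eq mult.commute power_minus)
    thus "E0 M w = (w - 1) powi int M * ((- 1) ^ M / D w)"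
      by (simp add: E0_def D_def power_int_of_nat)
  qed
  with an show ?thesis unfolding vo_def by blast
qed

lemma F4:
  assumes "M \<ge> 1"
  shows "vo (Ei M) 1 (int M)"
proof -
  define D where "D = (\<lambda>w::complex. w ^ M * (w - 1) ^ M + 1)"
  have an: "(\<lambda>w. w ^ M / D w) analytic_on {1}"
    unfolding D_def by (intro analytic_intros) (use assms in \<open>auto simp: power_0_left\<close>)
  have "eventually (\<lambda>w. Ei M w = (w - 1) powi int M * (w ^ M / D w)) (at 1)"
    by (intro always_eventually allI) (simp add: Ei_def D_def power_int_of_nat mult.commute)
  with an show ?thesis unfolding vo_def by blast
qed

definition e0r :: "nat \<Rightarrow> ratfun" where
  "e0r M = Fract ([:1, -1:] ^ M) ([:1, -1:] ^ M + monom 1 (2 * M))"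
definition eir :: "nat \<Rightarrow> ratfun" where
  "eir M = Fract (monom 1 M * [:-1, 1:] ^ M) (monom 1 M * [:-1, 1:] ^ M + 1)"

lemma pl1: "poly [:1, -1:] w = 1 - (w::complex)" by (simp add: algebra_simps)
lemma pl2: "poly [:-1, 1:] w = w - (1::complex)" by (simp add: algebra_simps)

lemma poly_D0: "poly ([:1, -1:] ^ M + monom 1 (2 * M)) w = (1 - w) ^ M + (w::complex) ^ (2 * M)"
  by (simp add: poly_monom pl1 del: poly_pCons)
lemma poly_Di: "poly (monom 1 M * [:-1, 1:] ^ M + 1) w = (w::complex) ^ M * (w - 1) ^ M + 1"
  by (simp add: poly_monom pl2 del: poly_pCons)

lemma D0_nz: "[:1, -1:] ^ M + monom 1 (2 * M) \<noteq> (0 :: complex poly)"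
proof
  assume "[:1, -1:] ^ M + monom 1 (2 * M) = (0 :: complex poly)"
  hence "poly ([:1, -1:] ^ M + monom 1 (2 * M)) 0 = (0::complex)" by simp
  hence "(1 - 0) ^ M + (0::complex) ^ (2 * M) = 0" by (simp only: poly_D0)
  thus False by (cases M) simp_all
qed

lemma Di_nz: "monom 1 M * [:-1, 1:] ^ M + 1 \<noteq> (0 :: complex poly)"
proof
  assume "monom 1 M * [:-1, 1:] ^ M + 1 = (0 :: complex poly)"
  hence "poly (monom 1 M * [:-1, 1:] ^ M + 1) 0 = (0::complex)" by simp
  hence "(0::complex) ^ M * (0 - 1) ^ M + 1 = 0" by (simp only: poly_Di)
  thus False by (cases M) simp_all
qed

lemma ev_nz_cof: "eventually (\<lambda>w::complex. w \<noteq> c) cofinite"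
  by (simp add: eventually_cofinite)

lemma e0r_eval: "eventually (\<lambda>w. rf_eval (e0r M) w = E0 M w) cofinite"
  using ev_cofinite_poly[OF D0_nz[of M]]
proof eventually_elim
  case (elim w)
  have "rf_eval (e0r M) w = poly ([:1, -1:] ^ M) w / poly ([:1, -1:] ^ M + monom 1 (2 * M)) w"
    unfolding e0r_def by (rule rf_eval_Fract[OF elim])
  thus ?case by (simp add: E0_def poly_monom pl1 del: poly_pCons)
qed

lemma eir_eval: "eventually (\<lambda>w. rf_eval (eir M) w = Ei M w) cofinite"
  using ev_cofinite_poly[OF Di_nz[of M]]
proof eventually_elim
  case (elim w)
  have "rf_eval (eir M) w = poly (monom 1 M * [:-1, 1:] ^ M) w / poly (monom 1 M * [:-1, 1:] ^ M + 1) w"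
    unfolding eir_def by (rule rf_eval_Fract[OF elim])
  thus ?case by (simp add: Ei_def poly_monom pl2 del: poly_pCons)
qed

lemma e0r_eval_inv: "eventually (\<lambda>w. rf_eval (e0r M) (1 / w) = Ei M w) cofinite"
  using cofinite_inv[OF e0r_eval[of M]] ev_nz_cof[of 0]
proof eventually_elim
  case (elim w)
  define X where "X = (w - 1) ^ M"
  define Y where "Y = w ^ M"
  have Y: "Y \<noteq> 0" using elim(2) by (simp add: Y_def)
  have "1 - 1 / w = (w - 1) / w" using elim(2) by (simp add: field_simps)
  hence a: "(1 - 1 / w) ^ M = X / Y" by (simp add: X_def Y_def power_divide)
  have b: "(1 / w) ^ (2 * M) = 1 / (Y * Y)" by (simp add: Y_def power_divide mult_2 power_add)
  have "E0 M (1 / w) = (X / Y) / (X / Y + 1 / (Y * Y))" by (simp add: E0_def a b)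
  also have "\<dots> = (Y * X) / (Y * X + 1)"
  proof (cases "Y * X + 1 = 0")
    case True
    have "X / Y + 1 / (Y * Y) = (Y * X + 1) / (Y * Y)" using Y by (simp add: field_simps)
    thus ?thesis using True by simp
  next
    case False
    have "X / Y + 1 / (Y * Y) = (Y * X + 1) / (Y * Y)" using Y by (simp add: field_simps)
    thus ?thesis using Y False by (simp add: field_simps)
  qed
  also have "\<dots> = Ei M w" by (simp add: Ei_def X_def Y_def)
  finally show ?case using elim(1) by simp
qed

lemma eir_eval_inv: "eventually (\<lambda>w. rf_eval (eir M) (1 / w) = E0 M w) cofinite"
  using cofinite_inv[OF eir_eval[of M]] ev_nz_cof[of 0]
proof eventually_elim
  case (elim w)
  define Z where "Z = (1 - w) ^ M"
  define Y where "Y = w ^ M"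
  have Y: "Y \<noteq> 0" using elim(2) by (simp add: Y_def)
  have "1 / w - 1 = (1 - w) / w" using elim(2) by (simp add: field_simps)
  hence a: "(1 / w) ^ M * (1 / w - 1) ^ M = Z / (Y * Y)" by (simp add: Z_def Y_def power_divide)
  have "Ei M (1 / w) = (Z / (Y * Y)) / (Z / (Y * Y) + 1)" unfolding Ei_def a by simp
  also have "\<dots> = Z / (Z + Y * Y)"
  proof (cases "Z + Y * Y = 0")
    case True
    have "Z / (Y * Y) + 1 = (Z + Y * Y) / (Y * Y)" using Y by (simp add: field_simps)
    thus ?thesis using True by simp
  next
    case False
    have "Z / (Y * Y) + 1 = (Z + Y * Y) / (Y * Y)" using Y by (simp add: field_simps)
    thus ?thesis using Y False by (simp add: field_simps)
  qed
  also have "\<dots> = E0 M w" by (simp add: E0_def Z_def Y_def mult_2 power_add)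
  finally show ?case using elim(1) by simp
qed




definition l0r :: "complex poly \<Rightarrow> nat \<Rightarrow> ratfun" where
  "l0r q k = Fract q (monom 1 k)"
definition l1r :: "complex poly \<Rightarrow> nat \<Rightarrow> ratfun" where
  "l1r q k = Fract (pcompose q [:-1, 1:]) ([:-1, 1:] ^ k)"
definition lir :: "complex poly \<Rightarrow> nat \<Rightarrow> ratfun" where
  "lir q k = Fract (reflect_poly q * monom 1 k) (monom 1 (degree q))"

lemma l0_eval: "w \<noteq> 0 \<Longrightarrow> rf_eval (l0r q k) w = poly q w / w ^ k"
  unfolding l0r_def by (subst rf_eval_Fract) (simp_all add: poly_monom)

lemma l1_eval: "w \<noteq> 1 \<Longrightarrow> rf_eval (l1r q k) w = poly q (w - 1) / (w - 1) ^ k"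
  unfolding l1r_def by (subst rf_eval_Fract) (simp_all add: poly_pcompose pl2 del: poly_pCons)

lemma li_eval:
  assumes "w \<noteq> 0"
  shows "rf_eval (lir q k) (1 / w) = poly q w / w ^ k"
proof -
  have nz: "poly (monom 1 (degree q)) (1 / w) \<noteq> 0" using assms by (simp add: poly_monom)
  have "rf_eval (lir q k) (1 / w) = poly (reflect_poly q * monom 1 k) (1 / w) / poly (monom 1 (degree q)) (1 / w)"
    unfolding lir_def by (rule rf_eval_Fract[OF nz])
  also have "\<dots> = ((1 / w) ^ degree q * poly q w * (1 / w) ^ k) / (1 / w) ^ degree q"
    using assms by (simp add: poly_reflect_poly_nz poly_monom)
  also have "\<dots> = poly q w / w ^ k" using assms by (simp add: field_simps)
  finally show ?thesis .
qed

lemma assemble: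
  assumes "vo u x (int M)" "vo v x (int M)" "vo s x (int M)"
    "vo la x (- int K)" "vo lb x (- int K)" "vo lc x (- int K)" "vo g x (int N)" "N + K \<le> M"
  shows "vo (\<lambda>w. u w * la w + v w * lb w + s w * lc w + g w) x (int N)"
proof -
  have le: "int N \<le> int M + - int K" using assms(8) by simp
  have t1: "vo (\<lambda>w. u w * la w) x (int N)" by (rule vo_comb[OF assms(1) assms(4) le])
  have t2: "vo (\<lambda>w. v w * lb w) x (int N)" by (rule vo_comb[OF assms(2) assms(5) le])
  have t3: "vo (\<lambda>w. s w * lc w) x (int N)" by (rule vo_comb[OF assms(3) assms(6) le])
  show ?thesis using vo_add[OF vo_add[OF vo_add[OF t1 t2] t3] assms(7)] .
qed

lemma approx3:
  assumes f0: "f0 meromorphic_on {0}" and f1: "f1 meromorphic_on {1}" and fi: "fi meromorphic_on {0}"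
  shows "\<exists>r. vo (\<lambda>w. rf_eval r w - f0 w) 0 (int N) \<and> vo (\<lambda>w. rf_eval r w - f1 w) 1 (int N)
            \<and> vo (\<lambda>w. rf_eval r (1 / w) - fi w) 0 (int N)"
proof -
  obtain k0 q0 where A0: "vo (\<lambda>w. f0 w - poly q0 (w - 0) / (w - 0) ^ k0) 0 (int N)"
    using mero_taylor_vo[OF f0] by blast
  obtain k1 q1 where A1: "vo (\<lambda>w. f1 w - poly q1 (w - 1) / (w - 1) ^ k1) 1 (int N)"
    using mero_taylor_vo[OF f1] by blast
  obtain ki qi where Ai: "vo (\<lambda>w. fi w - poly qi (w - 0) / (w - 0) ^ ki) 0 (int N)"
    using mero_taylor_vo[OF fi] by blast
  define l0 where "l0 = l0r q0 k0"
  define l1 where "l1 = l1r q1 k1"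
  define li where "li = lir qi ki"
  have L0: "vo (\<lambda>w. rf_eval l0 w - f0 w) 0 (int N)"
  proof (rule vo_cong[OF vo_uminus[OF A0]])
    show "eventually (\<lambda>w. - (f0 w - poly q0 (w - 0) / (w - 0) ^ k0) = rf_eval l0 w - f0 w) (at 0)"
      using ev_ne_at[of 0] by eventually_elim (simp add: l0_def l0_eval)
  qed
  have L1: "vo (\<lambda>w. rf_eval l1 w - f1 w) 1 (int N)"
  proof (rule vo_cong[OF vo_uminus[OF A1]])
    show "eventually (\<lambda>w. - (f1 w - poly q1 (w - 1) / (w - 1) ^ k1) = rf_eval l1 w - f1 w) (at 1)"
      using ev_ne_at[of 1] by eventually_elim (simp add: l1_def l1_eval)
  qed
  have Li: "vo (\<lambda>w. rf_eval li (1 / w) - fi w) 0 (int N)"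
  proof (rule vo_cong[OF vo_uminus[OF Ai]])
    show "eventually (\<lambda>w. - (fi w - poly qi (w - 0) / (w - 0) ^ ki) = rf_eval li (1 / w) - fi w) (at 0)"
      using ev_ne_at[of 0] by eventually_elim (simp add: li_def li_eval)
  qed
  obtain K00 where K00: "vo (rf_eval l0) 0 (- int K00)" using rf_vo_bound by blast
  obtain K01 where K01: "vo (rf_eval l1) 0 (- int K01)" using rf_vo_bound by blast
  obtain K02 where K02: "vo (rf_eval li) 0 (- int K02)" using rf_vo_bound by blast
  obtain K10 where K10: "vo (rf_eval l0) 1 (- int K10)" using rf_vo_bound by blast
  obtain K11 where K11: "vo (rf_eval l1) 1 (- int K11)" using rf_vo_bound by blast
  obtain K12 where K12: "vo (rf_eval li) 1 (- int K12)" using rf_vo_bound by blast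
  obtain K20 where K20: "vo (\<lambda>w. rf_eval l0 (1 / w)) 0 (- int K20)" using rf_vo_bound_inf by blast
  obtain K21 where K21: "vo (\<lambda>w. rf_eval l1 (1 / w)) 0 (- int K21)" using rf_vo_bound_inf by blast
  obtain K22 where K22: "vo (\<lambda>w. rf_eval li (1 / w)) 0 (- int K22)" using rf_vo_bound_inf by blast
  define K where "K = K00 + K01 + K02 + K10 + K11 + K12 + K20 + K21 + K22"
  have B00: "vo (rf_eval l0) 0 (- int K)" by (rule vo_mono[OF K00]) (simp add: K_def)
  have B01: "vo (rf_eval l1) 0 (- int K)" by (rule vo_mono[OF K01]) (simp add: K_def)
  have B02: "vo (rf_eval li) 0 (- int K)" by (rule vo_mono[OF K02]) (simp add: K_def)
  have B10: "vo (rf_eval l0) 1 (- int K)" by (rule vo_mono[OF K10]) (simp add: K_def)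
  have B11: "vo (rf_eval l1) 1 (- int K)" by (rule vo_mono[OF K11]) (simp add: K_def)
  have B12: "vo (rf_eval li) 1 (- int K)" by (rule vo_mono[OF K12]) (simp add: K_def)
  have B20: "vo (\<lambda>w. rf_eval l0 (1 / w)) 0 (- int K)" by (rule vo_mono[OF K20]) (simp add: K_def)
  have B21: "vo (\<lambda>w. rf_eval l1 (1 / w)) 0 (- int K)" by (rule vo_mono[OF K21]) (simp add: K_def)
  have B22: "vo (\<lambda>w. rf_eval li (1 / w)) 0 (- int K)" by (rule vo_mono[OF K22]) (simp add: K_def)
  define M where "M = N + K + 1"
  have M1: "M \<ge> 1" and NKM: "N + K \<le> M" by (simp_all add: M_def)
  define a where "a = rf_eval (e0r M)"
  define c where "c = rf_eval (eir M)"
  define r where "r = e0r M * l0 + (1 - e0r M - eir M) * l1 + eir M * li"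
  have comb: "eventually (\<lambda>w. rf_eval r w = a w * rf_eval l0 w + (1 - a w - c w) * rf_eval l1 w + c w * rf_eval li w) cofinite"
    unfolding r_def a_def c_def by (rule rf_eval_comb)
  have a0: "vo (\<lambda>w. a w - 1) 0 (int (2 * M))"
  proof (rule vo_cong[OF F1])
    show "eventually (\<lambda>w. E0 M w - 1 = a w - 1) (at 0)"
      using cofinite_at[OF e0r_eval[of M]] by eventually_elim (simp add: a_def)
  qed
  have c0: "vo c 0 (int M)"
  proof (rule vo_cong[OF F2])
    show "eventually (\<lambda>w. Ei M w = c w) (at 0)"
      using cofinite_at[OF eir_eval[of M]] by eventually_elim (simp add: c_def)
  qed
  have a0': "vo (\<lambda>w. a w - 1) 0 (int M)" by (rule vo_mono[OF a0]) simp
  have v0: "vo (\<lambda>w. - (a w - 1) - c w) 0 (int M)" by (rule vo_diff[OF vo_uminus[OF a0'] c0])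
  have R0: "vo (\<lambda>w. (a w - 1) * rf_eval l0 w + (- (a w - 1) - c w) * rf_eval l1 w + c w * rf_eval li w + (rf_eval l0 w - f0 w)) 0 (int N)"
    by (rule assemble[OF a0' v0 c0 B00 B01 B02 L0 NKM])
  have G0: "vo (\<lambda>w. rf_eval r w - f0 w) 0 (int N)"
  proof (rule vo_cong[OF R0])
    show "eventually (\<lambda>w. (a w - 1) * rf_eval l0 w + (- (a w - 1) - c w) * rf_eval l1 w + c w * rf_eval li w + (rf_eval l0 w - f0 w) = rf_eval r w - f0 w) (at 0)"
      using cofinite_at[OF comb] by eventually_elim (simp add: algebra_simps)
  qed
  have a1: "vo a 1 (int M)"
  proof (rule vo_cong[OF F3[OF M1]])
    show "eventually (\<lambda>w. E0 M w = a w) (at 1)"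
      using cofinite_at[OF e0r_eval[of M]] by eventually_elim (simp add: a_def)
  qed
  have c1: "vo c 1 (int M)"
  proof (rule vo_cong[OF F4[OF M1]])
    show "eventually (\<lambda>w. Ei M w = c w) (at 1)"
      using cofinite_at[OF eir_eval[of M]] by eventually_elim (simp add: c_def)
  qed
  have v1: "vo (\<lambda>w. - a w - c w) 1 (int M)" by (rule vo_diff[OF vo_uminus[OF a1] c1])
  have R1: "vo (\<lambda>w. a w * rf_eval l0 w + (- a w - c w) * rf_eval l1 w + c w * rf_eval li w + (rf_eval l1 w - f1 w)) 1 (int N)"
    by (rule assemble[OF a1 v1 c1 B10 B11 B12 L1 NKM])
  have G1: "vo (\<lambda>w. rf_eval r w - f1 w) 1 (int N)"
  proof (rule vo_cong[OF R1])
    show "eventually (\<lambda>w. a w * rf_eval l0 w + (- a w - c w) * rf_eval l1 w + c w * rf_eval li w + (rf_eval l1 w - f1 w) = rf_eval r w - f1 w) (at 1)"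
      using cofinite_at[OF comb] by eventually_elim (simp add: algebra_simps)
  qed
  have ai: "vo (\<lambda>w. a (1 / w)) 0 (int M)"
  proof (rule vo_cong[OF F2])
    show "eventually (\<lambda>w. Ei M w = a (1 / w)) (at 0)"
      using cofinite_at[OF e0r_eval_inv[of M]] by eventually_elim (simp add: a_def)
  qed
  have ci: "vo (\<lambda>w. c (1 / w) - 1) 0 (int (2 * M))"
  proof (rule vo_cong[OF F1])
    show "eventually (\<lambda>w. E0 M w - 1 = c (1 / w) - 1) (at 0)"
      using cofinite_at[OF eir_eval_inv[of M]] by eventually_elim (simp add: c_def)
  qed
  have ci': "vo (\<lambda>w. c (1 / w) - 1) 0 (int M)" by (rule vo_mono[OF ci]) simp
  have vi: "vo (\<lambda>w. - a (1 / w) - (c (1 / w) - 1)) 0 (int M)" by (rule vo_diff[OF vo_uminus[OF ai] ci'])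
  have Ri: "vo (\<lambda>w. a (1 / w) * rf_eval l0 (1 / w) + (- a (1 / w) - (c (1 / w) - 1)) * rf_eval l1 (1 / w)
      + (c (1 / w) - 1) * rf_eval li (1 / w) + (rf_eval li (1 / w) - fi w)) 0 (int N)"
    by (rule assemble[OF ai vi ci' B20 B21 B22 Li NKM])
  have Gi: "vo (\<lambda>w. rf_eval r (1 / w) - fi w) 0 (int N)"
  proof (rule vo_cong[OF Ri])
    show "eventually (\<lambda>w. a (1 / w) * rf_eval l0 (1 / w) + (- a (1 / w) - (c (1 / w) - 1)) * rf_eval l1 (1 / w)
      + (c (1 / w) - 1) * rf_eval li (1 / w) + (rf_eval li (1 / w) - fi w) = rf_eval r (1 / w) - fi w) (at 0)"
      using cofinite_at[OF cofinite_inv[OF comb]] by eventually_elim (simp add: algebra_simps)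
  qed
  show ?thesis using G0 G1 Gi by blast
qed




lemma choice2:
  assumes "\<forall>i j. \<exists>r. P i j r"
  shows "\<exists>f. \<forall>i j. P i j (f i j)"
  apply (rule choice)
  apply (rule allI)
  apply (rule choice)
  using assms by blast

lemma ex_of_cofinite:
  assumes "eventually P cofinite"
  shows "\<exists>w::complex. P w"
proof -
  have "eventually P (at (0::complex))" by (rule cofinite_at[OF assms])
  from eventually_happens[OF this] show ?thesis by simp
qed

lemma filterlim_power_at:
  assumes "(p::nat) \<ge> 1" "x ^ p = (x::complex)"
  shows "filterlim (\<lambda>w. w ^ p) (at x) (at x)"
proof (rule filterlim_atI)
  have "((\<lambda>w. w ^ p) \<longlongrightarrow> x ^ p) (at x)" by (intro tendsto_intros)
  thus "((\<lambda>w. w ^ p) \<longlongrightarrow> x) (at x)" using assms(2) by simp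
  have "finite {w::complex. w ^ p \<in> {x}}" by (rule finite_power_preimage) (use assms in auto)
  hence "eventually (\<lambda>w::complex. w ^ p \<noteq> x) cofinite" by (simp add: eventually_cofinite)
  thus "eventually (\<lambda>w. w ^ p \<noteq> x) (at x)" by (rule cofinite_at)
qed

lemma B_eval:
  fixes R A :: "ratfun^'n^'n"
  assumes "invertible (phi_mat p R)" "p \<ge> 1"
  shows "eventually (\<lambda>w. mat_eval (matrix_inv (phi_mat p R) ** A ** R) w
            = matrix_inv (mat_eval R (w ^ p)) ** mat_eval A w ** mat_eval R w) cofinite"
proof -
  have e1: "eventually (\<lambda>w. mat_eval (matrix_inv (phi_mat p R) ** A ** R) w = mat_eval (matrix_inv (phi_mat p R) ** A) w ** mat_eval R w) cofinite"
    by (rule mat_eval_mult)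
  have e2: "eventually (\<lambda>w. mat_eval (matrix_inv (phi_mat p R) ** A) w = mat_eval (matrix_inv (phi_mat p R)) w ** mat_eval A w) cofinite"
    by (rule mat_eval_mult)
  have e3: "eventually (\<lambda>w. mat_eval (matrix_inv (phi_mat p R)) w = matrix_inv (mat_eval (phi_mat p R) w)) cofinite"
    by (rule mat_eval_inv[OF assms(1)])
  have e4: "eventually (\<lambda>w. mat_eval (phi_mat p R) w = mat_eval R (w ^ p)) cofinite"
    by (rule mat_eval_phi[OF assms(2)])
  from e1 e2 e3 e4 show ?thesis by eventually_elim simp
qed

theorem mainTheorem5:
  fixes p :: nat and A :: "ratfun ^'n ^'n"
  assumes "p \<ge> 2"
    and "invertible A"
    and "regular_singular_at p A 0"
    and "regular_singular_at p A 1"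
    and "regular_singular_at_infinity p A"
  shows "\<exists>R :: ratfun ^'n ^'n. invertible R \<and>
           (let B = matrix_inv (phi_mat p R) ** A ** R in
              regular_at B 0 \<and> regular_at B 1 \<and> regular_at_infinity B)"
proof -
  have p1: "p \<ge> 1" using assms(1) by simp
  obtain T0 :: "complex \<Rightarrow> complex^'n^'n" where T0m: "\<And>i j. (\<lambda>w. T0 w $ i $ j) meromorphic_on {0}"
    and T0d: "\<not> eventually (\<lambda>w. det (T0 w) = 0) (at 0)"
    and T0r: "germ_regular_at (\<lambda>w. matrix_inv (T0 (w ^ p)) ** mat_eval A w ** T0 w) 0"
    using assms(3) unfolding regular_singular_at_def reg_sing_chart_def by blast
  obtain T1 :: "complex \<Rightarrow> complex^'n^'n" where T1m: "\<And>i j. (\<lambda>w. T1 w $ i $ j) meromorphic_on {1}"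
    and T1d: "\<not> eventually (\<lambda>w. det (T1 w) = 0) (at 1)"
    and T1r: "germ_regular_at (\<lambda>w. matrix_inv (T1 (w ^ p)) ** mat_eval A w ** T1 w) 1"
    using assms(4) unfolding regular_singular_at_def reg_sing_chart_def by blast
  obtain Ti :: "complex \<Rightarrow> complex^'n^'n" where Tim: "\<And>i j. (\<lambda>w. Ti w $ i $ j) meromorphic_on {0}"
    and Tid: "\<not> eventually (\<lambda>w. det (Ti w) = 0) (at 0)"
    and Tir: "germ_regular_at (\<lambda>w. matrix_inv (Ti (w ^ p)) ** mat_eval A (1 / w) ** Ti w) 0"
    using assms(5) unfolding regular_singular_at_infinity_def reg_sing_chart_def by blast
  obtain K0 where K0: "\<forall>i j. vo (\<lambda>w. matrix_inv (T0 w) $ i $ j) 0 K0" using inv_bound[OF T0m T0d] by blast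
  obtain K1 where K1: "\<forall>i j. vo (\<lambda>w. matrix_inv (T1 w) $ i $ j) 1 K1" using inv_bound[OF T1m T1d] by blast
  obtain Ki where Ki: "\<forall>i j. vo (\<lambda>w. matrix_inv (Ti w) $ i $ j) 0 Ki" using inv_bound[OF Tim Tid] by blast
  define M0 where "M0 = max 0 (max (1 - K0) (max (1 - K1) (1 - Ki)))"
  define N where "N = nat M0"
  have NM: "int N = M0" by (simp add: N_def M0_def)
  have N0: "1 - K0 \<le> int N" and N1: "1 - K1 \<le> int N" and Ni: "1 - Ki \<le> int N"
    unfolding NM by (simp_all add: M0_def)
  have ex: "\<forall>i j. \<exists>r. vo (\<lambda>w. rf_eval r w - T0 w $ i $ j) 0 (int N) \<and> vo (\<lambda>w. rf_eval r w - T1 w $ i $ j) 1 (int N)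
            \<and> vo (\<lambda>w. rf_eval r (1 / w) - Ti w $ i $ j) 0 (int N)"
  proof (intro allI)
    fix i j
    show "\<exists>r. vo (\<lambda>w. rf_eval r w - T0 w $ i $ j) 0 (int N) \<and> vo (\<lambda>w. rf_eval r w - T1 w $ i $ j) 1 (int N)
            \<and> vo (\<lambda>w. rf_eval r (1 / w) - Ti w $ i $ j) 0 (int N)"
      by (rule approx3[OF T0m T1m Tim])
  qed
  from choice2[OF ex] obtain rr where rr: "\<forall>i j. vo (\<lambda>w. rf_eval (rr i j) w - T0 w $ i $ j) 0 (int N) \<and> vo (\<lambda>w. rf_eval (rr i j) w - T1 w $ i $ j) 1 (int N)
            \<and> vo (\<lambda>w. rf_eval (rr i j) (1 / w) - Ti w $ i $ j) 0 (int N)" ..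
  define R :: "ratfun^'n^'n" where "R = (\<chi> i j. rr i j)"
  have ME: "mat_eval R w $ i $ j = rf_eval (rr i j) w" for w i j by (simp add: mat_eval_def R_def)
  have R0: "\<forall>i j. vo (\<lambda>w. mat_eval R w $ i $ j - T0 w $ i $ j) 0 (1 - K0)"
  proof (intro allI)
    fix i j
    have "vo (\<lambda>w. rf_eval (rr i j) w - T0 w $ i $ j) 0 (int N)" using rr by blast
    hence "vo (\<lambda>w. rf_eval (rr i j) w - T0 w $ i $ j) 0 (1 - K0)" by (rule vo_mono) (rule N0)
    thus "vo (\<lambda>w. mat_eval R w $ i $ j - T0 w $ i $ j) 0 (1 - K0)" by (simp only: ME)
  qed
  have R1: "\<forall>i j. vo (\<lambda>w. mat_eval R w $ i $ j - T1 w $ i $ j) 1 (1 - K1)"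
  proof (intro allI)
    fix i j
    have "vo (\<lambda>w. rf_eval (rr i j) w - T1 w $ i $ j) 1 (int N)" using rr by blast
    hence "vo (\<lambda>w. rf_eval (rr i j) w - T1 w $ i $ j) 1 (1 - K1)" by (rule vo_mono) (rule N1)
    thus "vo (\<lambda>w. mat_eval R w $ i $ j - T1 w $ i $ j) 1 (1 - K1)" by (simp only: ME)
  qed
  have Ri: "\<forall>i j. vo (\<lambda>w. mat_eval R (1 / w) $ i $ j - Ti w $ i $ j) 0 (1 - Ki)"
  proof (intro allI)
    fix i j
    have "vo (\<lambda>w. rf_eval (rr i j) (1 / w) - Ti w $ i $ j) 0 (int N)" using rr by blast
    hence "vo (\<lambda>w. rf_eval (rr i j) (1 / w) - Ti w $ i $ j) 0 (1 - Ki)" by (rule vo_mono) (rule Ni)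
    thus "vo (\<lambda>w. mat_eval R (1 / w) $ i $ j - Ti w $ i $ j) 0 (1 - Ki)" by (simp only: ME)
  qed
  have lim0: "filterlim (\<lambda>w. w ^ p) (at 0) (at (0::complex))" by (rule filterlim_power_at) (use p1 in auto)
  have lim1: "filterlim (\<lambda>w. w ^ p) (at 1) (at (1::complex))" by (rule filterlim_power_at) (use p1 in auto)
  have xp0: "(0::complex) ^ p = 0" using p1 by simp
  have xp1: "(1::complex) ^ p = 1" by simp
  have "germ_regular_at (\<lambda>w. matrix_inv (mat_eval R (w ^ p)) ** mat_eval A w ** mat_eval R w) 0
      \<and> eventually (\<lambda>w. det (mat_eval R w) \<noteq> 0) (at 0)"
    by (rule local_regular[OF T0m T0d T0r K0 R0 lim0 xp0]) simp
  hence evdet: "eventually (\<lambda>w. det (mat_eval R w) \<noteq> 0) (at 0)" by blast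
  have "eventually (\<lambda>w. rf_eval (det R) w = det (mat_eval R w)) (at 0)"
    by (rule cofinite_at[OF mat_eval_det])
  with evdet have "eventually (\<lambda>w. rf_eval (det R) w \<noteq> 0) (at 0)" by eventually_elim simp
  from eventually_happens[OF this] obtain w0 where "rf_eval (det R) w0 \<noteq> 0" by auto
  hence detR: "det R \<noteq> 0" by auto
  hence invR: "invertible R" by (simp add: invertible_det_nz)
  have "eventually (\<lambda>w. rf_eval (det (phi_mat p R)) w \<noteq> 0) cofinite"
  proof -
    have a: "eventually (\<lambda>w. rf_eval (det (phi_mat p R)) w = det (mat_eval (phi_mat p R) w)) cofinite"
      by (rule mat_eval_det)
    have b: "eventually (\<lambda>w. mat_eval (phi_mat p R) w = mat_eval R (w ^ p)) cofinite"
      by (rule mat_eval_phi[OF p1])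
    have c: "eventually (\<lambda>w. rf_eval (det R) (w ^ p) = det (mat_eval R (w ^ p))) cofinite"
      by (rule cofinite_vimage_power[OF mat_eval_det p1])
    have d: "eventually (\<lambda>w. rf_eval (det R) (w ^ p) \<noteq> 0) cofinite"
      by (rule cofinite_vimage_power[OF rf_eval_nz[OF detR] p1])
    from a b c d show ?thesis by eventually_elim simp
  qed
  then obtain w1 where "rf_eval (det (phi_mat p R)) w1 \<noteq> 0" using ex_of_cofinite by blast
  hence "det (phi_mat p R) \<noteq> 0" by auto
  hence invPR: "invertible (phi_mat p R)" by (simp add: invertible_det_nz)
  define B where "B = matrix_inv (phi_mat p R) ** A ** R"
  have Bcof: "eventually (\<lambda>w. mat_eval B w = matrix_inv (mat_eval R (w ^ p)) ** mat_eval A w ** mat_eval R w) cofinite"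
    unfolding B_def by (rule B_eval[OF invPR p1])
  have "germ_regular_at (\<lambda>w. mat_eval B w) 0 \<and> eventually (\<lambda>w. det (mat_eval R w) \<noteq> 0) (at 0)"
    by (rule local_regular[OF T0m T0d T0r K0 R0 lim0 xp0 cofinite_at[OF Bcof]])
  hence reg0: "regular_at B 0" by (simp add: regular_at_def)
  have "germ_regular_at (\<lambda>w. mat_eval B w) 1 \<and> eventually (\<lambda>w. det (mat_eval R w) \<noteq> 0) (at 1)"
    by (rule local_regular[OF T1m T1d T1r K1 R1 lim1 xp1 cofinite_at[OF Bcof]])
  hence reg1: "regular_at B 1" by (simp add: regular_at_def)
  have Bi: "eventually (\<lambda>w. mat_eval B (1 / w) = matrix_inv (mat_eval R (1 / w ^ p)) ** mat_eval A (1 / w) ** mat_eval R (1 / w)) (at 0)"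
    using cofinite_at[OF cofinite_inv[OF Bcof]] by eventually_elim (simp add: power_one_over)
  have "germ_regular_at (\<lambda>w. mat_eval B (1 / w)) 0 \<and> eventually (\<lambda>w. det (mat_eval R (1 / w)) \<noteq> 0) (at 0)"
    by (rule local_regular[OF Tim Tid Tir Ki Ri lim0 xp0 Bi])
  hence regi: "regular_at_infinity B" by (simp add: regular_at_infinity_def)
  show ?thesis using invR reg0 reg1 regi unfolding B_def Let_def by blast
qed



end
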